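(* Let $C \ge 2$, $d \ge 1$, $I \ge 1$ and $J$ be integers with $1 \le J \le C$. Let $\{\xi_i\}_{i=1}^m$ be a sequence of random variables and $\{\mathbf{y}_i\}_{i=1}^m$ a sequence of random vectors in $\mathbb{R}^d$, each $\mathbf{y}_i$ depending on $\xi_1,\dots,\xi_i$, such that $\mathbb{E}_{\xi_i}[\mathbf{y}_i \mid \xi_1,\dots,\xi_{i-1}] = \mathbf{e}_i$ (so $\{\mathbf{y}_i-\mathbf{e}_i\}$ is a martingale difference sequence with respect to the filtration generated by $\{\xi_i\}$) and $\mathbb{E}_{\xi_i}[\|\mathbf{y}_i-\mathbf{e}_i\|^2 \mid \xi_1,\dots,\xi_{i-1}] \le \delta^2$ for all $i$, for a fixed constant $\delta>0$. Let $\mathbf{x}_1,\dots,\mathbf{x}_C \in \mathbb{R}^d$ be fixed vectors with population mean $\overline{\mathbf{x}} = \frac{1}{C}\sum_{k=1}^C \mathbf{x}_k$ and population variance $\nu^2 = \frac{1}{C}\sum_{k=1}^C \|\mathbf{x}_k-\overline{\mathbf{x}}\|^2$, and let $\psi=(\psi_1,\dots,\psi_C)$ be a uniformly random permutation of $\{1,\dots,C\}$ (i.e. $\mathbf{x}_{\psi_1},\mathbf{x}_{\psi_2},\dots$ are drawn from the population by sampling without replacement). For $1\le c\le J$, $0 \le i \le I-1$ and $1\le k\le c$ define $$p_{c,i}(k) = \begin{cases} I-1, & k \le c-1,\\ i-1, & k = c.\end{cases}$$ Then $$\sum_{c=1}^J \sum_{i=0}^{I-1} \mathbb{E}\left\|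 \sum_{k=1}^{c} \sum_{j=0}^{p_{c,i}(k)} (\mathbf{x}_{\psi_k} - \overline{\mathbf{x}})\right\|^2 \le \frac{1}{2} J^2 I^3 \nu^2 .$$
   Context: $\|\cdot\|$ is the Euclidean norm. An inner sum $\sum_{j=0}^{p}$ with $p=-1$ (which occurs for $k=c$, $i=0$) is empty and equals $0$. The expectation is over the random permutation $\psi$. The martingale vectors were denoted $\mathbf{x}_i$ in the paper; they are renamed $\mathbf{y}_i$ here only to avoid a clash with the population vectors. *)

theory Defs
  imports "HOL-Analysis.Analysis" "HOL-Probability.Probability" "HOL-Combinatorics.Permutations"
begin

definition pop_mean :: "nat \<Rightarrow> (nat \<Rightarrow> 'a::real_vector) \<Rightarrow> 'a" where
  "pop_mean C x = (1 / real C) *\<^sub>R (\<Sum>k=1..C. x k)"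

definition pop_var :: "nat \<Rightarrow> (nat \<Rightarrow> 'a::real_normed_vector) \<Rightarrow> real" where
  "pop_var C x = (1 / real C) * (\<Sum>k=1..C. (norm (x k - pop_mean C x))^2)"

text \<open>p_{c,i}(k): I-1 if k <= c-1, and i-1 if k = c (an integer; may be -1).\<close>
definition pci :: "nat \<Rightarrow> nat \<Rightarrow> nat \<Rightarrow> nat \<Rightarrow> int" where
  "pci I c i k = (if k < c then int I - 1 else int i - 1)"

end

theory Submission imports Defs begin

abbreviation "Perms A \<equiv> {\<psi>. \<psi> permutes A}"

lemma sum_perm_right:
  assumes "\<tau> permutes A"
  shows "(\<Sum>\<psi>\<in>Perms A. G \<psi>) = (\<Sum>\<psi>\<in>Perms A. G (\<psi> \<circ> \<tau>))"
proof -
  have "bij_betw (\<lambda>\<psi>. \<psi> \<circ> \<tau>) (Perms A) (Perms A)"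
    apply (rule bij_betw_byWitness[where f'="\<lambda>\<psi>. \<psi> \<circ> inv \<tau>"])
    using assms permutes_inv_o[OF assms] by (auto simp: permutes_compose permutes_inv comp_assoc)
  then show ?thesis by (rule sum.reindex_bij_betw[symmetric])
qed

lemma sum_perm_pt:
  assumes "k \<in> A" "k' \<in> A"
  shows "(\<Sum>\<psi>\<in>Perms A. g (\<psi> k)) = (\<Sum>\<psi>\<in>Perms A. g (\<psi> k'))"
  using sum_perm_right[OF permutes_swap_id[OF assms(2) assms(1)], of "\<lambda>\<psi>. g (\<psi> k')"]
  by simp

lemma sum_perm_marg:
  assumes "finite A" "k \<in> A"
  shows "real (card A) * (\<Sum>\<psi>\<in>Perms A. g (\<psi> k)) = real (card (Perms A)) * (\<Sum>m\<in>A. g m)"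
proof -
  have "real (card A) * (\<Sum>\<psi>\<in>Perms A. g (\<psi> k)) = (\<Sum>k'\<in>A. \<Sum>\<psi>\<in>Perms A. g (\<psi> k'))"
  proof -
    have "(\<Sum>k'\<in>A. \<Sum>\<psi>\<in>Perms A. g (\<psi> k')) = (\<Sum>k'\<in>A. \<Sum>\<psi>\<in>Perms A. g (\<psi> k))"
      apply (rule sum.cong[OF refl]) subgoal for k' using sum_perm_pt[OF assms(2), of k' g] by simp done
    then show ?thesis by simp
  qed
  also have "\<dots> = (\<Sum>\<psi>\<in>Perms A. \<Sum>k'\<in>A. g (\<psi> k'))" by (rule sum.swap)
  also have "\<dots> = (\<Sum>\<psi>\<in>Perms A. \<Sum>m\<in>A. g m)"
    apply (rule sum.cong[OF refl]) subgoal for \<psi> using sum.permute[of \<psi> A g] by (simp add: comp_def) done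
  finally show ?thesis by simp
qed

lemma sum_perm_pair:
  fixes z :: "nat \<Rightarrow> 'a::real_inner"
  assumes "finite A" "k \<in> A" "l \<in> A" "k \<noteq> l" "(\<Sum>m\<in>A. z m) = 0"
  shows "(\<Sum>\<psi>\<in>Perms A. inner (z (\<psi> k)) (z (\<psi> l))) \<le> 0"
proof -
  define T where "T l' = (\<Sum>\<psi>\<in>Perms A. inner (z (\<psi> k)) (z (\<psi> l')))" for l'
  have eq: "T l' = T l" if "l' \<in> A - {k}" for l'
  proof -
    have "(Transposition.transpose l l') k = k" using that assms by auto
    then show ?thesis
      using sum_perm_right[OF permutes_swap_id[OF assms(3), where b=l'], of "\<lambda>\<psi>. inner (z (\<psi> k)) (z (\<psi> l'))"] that
      unfolding T_def by simp
  qed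
  have sz: "(\<Sum>l'\<in>A. z (\<psi> l')) = 0" if "\<psi> permutes A" for \<psi>
    using sum.permute[OF that, where g=z] assms(5) by (simp add: comp_def)
  have "real (card (A - {k})) * T l = (\<Sum>l'\<in>A - {k}. T l')"
    using eq by simp
  also have "\<dots> = (\<Sum>\<psi>\<in>Perms A. inner (z (\<psi> k)) (\<Sum>l'\<in>A - {k}. z (\<psi> l')))"
    unfolding T_def by (simp add: inner_sum_right sum.swap[of _ "A - {k}"])
  also have "\<dots> = (\<Sum>\<psi>\<in>Perms A. - inner (z (\<psi> k)) (z (\<psi> k)))"
    apply (rule sum.cong[OF refl])
    using sz assms by (simp add: sum_diff1 inner_diff_right)
  also have "\<dots> \<le> 0" by (simp add: sum_nonpos)
  finally have "real (card (A - {k})) * T l \<le> 0" .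
  moreover have "card (A - {k}) > 0" using assms by (intro card_gt_0_iff[THEN iffD2] conjI) auto
  ultimately have "T l \<le> 0" by (simp add: mult_le_0_iff)
  then show ?thesis unfolding T_def .
qed

lemma quad_bound:
  fixes z :: "nat \<Rightarrow> 'a::real_inner"
  assumes "finite A" "K \<subseteq> A" "\<And>k. a k \<ge> 0" "(\<Sum>m\<in>A. z m) = 0"
  shows "(\<Sum>\<psi>\<in>Perms A. (norm (\<Sum>k\<in>K. a k *\<^sub>R z (\<psi> k)))^2)
     \<le> (\<Sum>k\<in>K. (a k)^2) * (real (card (Perms A)) * (\<Sum>m\<in>A. (norm (z m))^2) / real (card A))"
proof -
  have fK: "finite K" using assms finite_subset by blast
  define T where "T k l = (\<Sum>\<psi>\<in>Perms A. inner (z (\<psi> l)) (z (\<psi> k)))" for k l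
  define V where "V = real (card (Perms A)) * (\<Sum>m\<in>A. (norm (z m))^2) / real (card A)"
  have "(\<Sum>\<psi>\<in>Perms A. (norm (\<Sum>k\<in>K. a k *\<^sub>R z (\<psi> k)))^2)
     = (\<Sum>\<psi>\<in>Perms A. \<Sum>k\<in>K. \<Sum>l\<in>K. a k * (a l * inner (z (\<psi> l)) (z (\<psi> k))))"
    by (simp add: power2_norm_eq_inner inner_sum_left inner_sum_right sum_distrib_left mult.assoc)
  also have "\<dots> = (\<Sum>k\<in>K. \<Sum>l\<in>K. a k * a l * T k l)"
    unfolding T_def sum_distrib_left
    by (subst sum.swap, rule sum.cong[OF refl], subst sum.swap, simp add: mult.assoc)
  also have "\<dots> \<le> (\<Sum>k\<in>K. (a k)^2 * T k k)"
  proof (rule sum_mono)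
    fix k assume k: "k \<in> K"
    have "(\<Sum>l\<in>K. a k * a l * T k l) = a k * a k * T k k + (\<Sum>l\<in>K - {k}. a k * a l * T k l)"
      using fK k by (simp add: sum.remove)
    moreover have "(\<Sum>l\<in>K - {k}. a k * a l * T k l) \<le> 0"
    proof (rule sum_nonpos)
      fix l assume l: "l \<in> K - {k}"
      have "T k l \<le> 0" unfolding T_def
        using sum_perm_pair[OF assms(1) _ _ _ assms(4), of l k] k l assms(2) by auto
      then show "a k * a l * T k l \<le> 0"
        using assms(3)[of k] assms(3)[of l] by (simp add: mult_nonneg_nonpos)
    qed
    ultimately show "(\<Sum>l\<in>K. a k * a l * T k l) \<le> (a k)^2 * T k k"
      by (simp add: power2_eq_square)
  qed
  also have "\<dots> = (\<Sum>k\<in>K. (a k)^2 * V)"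
  proof (rule sum.cong[OF refl])
    fix k assume k: "k \<in> K"
    have cA: "card A > 0" using k assms(1,2) card_gt_0_iff by blast
    have "real (card A) * T k k = real (card (Perms A)) * (\<Sum>m\<in>A. inner (z m) (z m))"
      unfolding T_def using sum_perm_marg[OF assms(1), of k "\<lambda>m. inner (z m) (z m)"] k assms(2) by auto
    then have "T k k = V" unfolding V_def using cA
      by (simp add: power2_norm_eq_inner field_simps)
    then show "(a k)^2 * T k k = (a k)^2 * V" by simp
  qed
  finally show ?thesis unfolding V_def[symmetric] by (simp add: sum_distrib_right)
qed

lemma sq_sum_bound: "(\<Sum>i<I. (real i)^2) \<le> real I ^ 3 / 3"
proof (induction I)
  case 0 then show ?case by simp
next
  case (Suc n)
  have "(\<Sum>i<Suc n. (real i)^2) = (\<Sum>i<n. (real i)^2) + (real n)^2" by simp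
  also have "\<dots> \<le> real n ^ 3 / 3 + (real n)^2" using Suc by simp
  also have "\<dots> \<le> real (Suc n) ^ 3 / 3" by (simp add: power3_eq_cube power2_eq_square algebra_simps)
  finally show ?case .
qed

lemma c_sum: "(\<Sum>c=1..J. (real c - 1) + 1/3) = real J ^ 2 / 2 - real J / 6"
proof (induction J)
  case 0 then show ?case by simp
next
  case (Suc n)
  have "(\<Sum>c=1..Suc n. (real c - 1) + 1/3) = (\<Sum>c=1..n. (real c - 1) + 1/3) + ((real (Suc n) - 1) + 1/3)"
    by simp
  also have "\<dots> = real n ^ 2 / 2 - real n / 6 + ((real (Suc n) - 1) + 1/3)" using Suc.IH by simp
  also have "\<dots> = real (Suc n) ^ 2 / 2 - real (Suc n) / 6" by (simp add: power2_eq_square field_simps)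
  finally show ?case .
qed

lemma ite_sum:
  assumes "c \<ge> (1::nat)"
  shows "(\<Sum>k=1..c. (if k < c then u else v)) = real (c - 1) * u + (v::real)"
proof -
  have "{1..c} = insert c {1..<c}" using assms by auto
  then have "(\<Sum>k=1..c. (if k < c then u else v)) = v + (\<Sum>k\<in>{1..<c}. (if k < c then u else v))"
    by simp
  also have "(\<Sum>k\<in>{1..<c}. (if k < c then u else v)) = (\<Sum>k\<in>{1..<c}. u)" by simp
  finally show ?thesis by simp
qed

theorem lemma4:
  fixes C I J :: nat and x :: "nat \<Rightarrow> real^'d"
  assumes "C \<ge> 2" and "I \<ge> 1" and "1 \<le> J" and "J \<le> C"
  shows "(\<Sum>c=1..J. \<Sum>i<I.
            measure_pmf.expectation (pmf_of_set {\<psi>. \<psi> permutes {1..C}})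
              (\<lambda>\<psi>. (norm (\<Sum>k=1..c. \<Sum>j\<in>{0..pci I c i k}. x (\<psi> k) - pop_mean C x))^2))
         \<le> 1/2 * real J ^ 2 * real I ^ 3 * pop_var C x"
proof -
  define A where "A = {1..C}"
  define z where "z m = x m - pop_mean C x" for m
  define \<nu> where "\<nu> = pop_var C x"
  define a where "a c i k = (if k < c then real I else real i)" for c i k :: nat
  have fA: "finite A" unfolding A_def by simp
  have cA: "card A = C" unfolding A_def by simp
  have Cpos: "real C > 0" using assms(1) by simp
  have fS: "finite (Perms A)" using fA by (rule finite_permutations)
  have Sne: "Perms A \<noteq> {}" using permutes_id[of A] by blast
  have Spos: "real (card (Perms A)) > 0" using fS Sne by (simp add: card_gt_0_iff)
  have zsum: "(\<Sum>m\<in>A. z m) = 0"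
  proof -
    have "(\<Sum>m\<in>A. z m) = (\<Sum>m\<in>A. x m) - real C *\<^sub>R pop_mean C x"
      unfolding z_def by (simp only: sum_subtractf sum_constant_scaleR cA)
    also have "\<dots> = 0" using Cpos unfolding pop_mean_def A_def by simp
    finally show ?thesis .
  qed
  have nu: "\<nu> = (\<Sum>m\<in>A. (norm (z m))^2) / real C"
    unfolding \<nu>_def pop_var_def z_def A_def by simp
  have nu0: "\<nu> \<ge> 0" unfolding nu using Cpos by (simp add: sum_nonneg)
  have inner_eq: "(\<Sum>j\<in>{0..pci I c i k}. x (\<psi> k) - pop_mean C x) = a c i k *\<^sub>R z (\<psi> k)"
    for c i k :: nat and \<psi>
    unfolding sum_constant_scaleR z_def a_def pci_def by simp
  have E: "measure_pmf.expectation (pmf_of_set (Perms A))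
              (\<lambda>\<psi>. (norm (\<Sum>k=1..c. \<Sum>j\<in>{0..pci I c i k}. x (\<psi> k) - pop_mean C x))^2)
        \<le> (real (c - 1) * (real I)^2 + (real i)^2) * \<nu>" if c: "c \<in> {1..J}" for c i
  proof -
    have KA: "{1..c} \<subseteq> A" using c assms(4) unfolding A_def by auto
    have "measure_pmf.expectation (pmf_of_set (Perms A))
              (\<lambda>\<psi>. (norm (\<Sum>k=1..c. \<Sum>j\<in>{0..pci I c i k}. x (\<psi> k) - pop_mean C x))^2)
         = (\<Sum>\<psi>\<in>Perms A. (norm (\<Sum>k=1..c. a c i k *\<^sub>R z (\<psi> k)))^2) / real (card (Perms A))"
      by (simp only: integral_pmf_of_set[OF Sne fS] inner_eq)
    also have "\<dots> \<le> (\<Sum>k=1..c. (a c i k)^2) * (real (card (Perms A)) * (\<Sum>m\<in>A. (norm (z m))^2) / real (card A))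
                 / real (card (Perms A))"
      by (rule divide_right_mono[OF quad_bound[OF fA KA _ zsum]]) (auto simp: a_def)
    also have "\<dots> = (\<Sum>k=1..c. (a c i k)^2) * \<nu>"
      using Spos unfolding nu cA by simp
    also have "(\<Sum>k=1..c. (a c i k)^2) = real (c - 1) * (real I)^2 + (real i)^2"
    proof -
      have "(\<Sum>k=1..c. (a c i k)^2) = (\<Sum>k=1..c. (if k < c then (real I)^2 else (real i)^2))"
        unfolding a_def by (rule sum.cong) auto
      also have "\<dots> = real (c - 1) * (real I)^2 + (real i)^2" using c by (intro ite_sum) auto
      finally show ?thesis .
    qed
    finally show ?thesis .
  qed
  have "(\<Sum>c=1..J. \<Sum>i<I.
            measure_pmf.expectation (pmf_of_set (Perms A))
              (\<lambda>\<psi>. (norm (\<Sum>k=1..c. \<Sum>j\<in>{0..pci I c i k}. x (\<psi> k) - pop_mean C x))^2))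
      \<le> (\<Sum>c=1..J. \<Sum>i<I. (real (c - 1) * (real I)^2 + (real i)^2) * \<nu>)"
    by (intro sum_mono E) auto
  also have "\<dots> = \<nu> * (\<Sum>c=1..J. (real c - 1) * real I ^ 3 + (\<Sum>i<I. (real i)^2))"
  proof -
    have "(\<Sum>i<I. (real (c - 1) * (real I)^2 + (real i)^2) * \<nu>)
          = \<nu> * ((real c - 1) * real I ^ 3 + (\<Sum>i<I. (real i)^2))" if "c \<in> {1..J}" for c
    proof -
      have r: "real (c - 1) = real c - 1" using that by (simp add: of_nat_diff)
      have "(\<Sum>i<I. (real (c - 1) * (real I)^2 + (real i)^2) * \<nu>)
          = (\<Sum>i<I. real (c - 1) * (real I)^2 * \<nu>) + (\<Sum>i<I. (real i)^2 * \<nu>)"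
        by (simp add: distrib_right sum.distrib)
      also have "\<dots> = real I * (real (c - 1) * (real I)^2 * \<nu>) + (\<Sum>i<I. (real i)^2) * \<nu>"
        by (simp add: sum_distrib_right)
      also have "\<dots> = \<nu> * ((real c - 1) * real I ^ 3 + (\<Sum>i<I. (real i)^2))"
        unfolding r by (simp add: power2_eq_square power3_eq_cube algebra_simps)
      finally show ?thesis .
    qed
    then show ?thesis by (simp add: sum_distrib_left)
  qed
  also have "\<dots> \<le> \<nu> * (\<Sum>c=1..J. (real c - 1) * real I ^ 3 + real I ^ 3 / 3)"
    using nu0 sq_sum_bound[of I] by (intro mult_left_mono sum_mono) auto
  also have "\<dots> = \<nu> * real I ^ 3 * (\<Sum>c=1..J. (real c - 1) + 1/3)"
    by (simp add: sum_distrib_left algebra_simps)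
  also have "\<dots> = \<nu> * real I ^ 3 * (real J ^ 2 / 2 - real J / 6)" by (simp only: c_sum)
  also have "\<dots> \<le> 1/2 * real J ^ 2 * real I ^ 3 * \<nu>"
    using nu0 by (simp add: algebra_simps)
  finally show ?thesis unfolding A_def \<nu>_def .
qed

end
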